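(* For all integers $m,n\geq 1$, \[p^{od}_{ed}(m,2n)-p^{od}_{ed}(m,2n-1)=D_o(m,2n).\]
   Context: $\mathcal{P}^{od}_{ed}$ is the set of integer partitions whose parts are all distinct and such that every even part is smaller than every odd part. Partitions consisting only of odd parts, or only of even parts, are allowed. $p^{od}_{ed}(m,n)$ is the number of partitions of $n$ in $\mathcal{P}^{od}_{ed}$ with exactly $m$ parts. $D_o(m,n)$ is the number of partitions of $n$ into exactly $m$ distinct odd parts. *)

theory Defs
  imports Main
begin

text \<open>A partition into distinct parts is represented by its (finite) set of parts,
all positive. The partition is in P^od_ed if every even part is smaller than every odd part.\<close>

definition P_od_ed :: "nat set set" where
  "P_od_ed = {P. finite P \<and> 0 \<notin> P \<and>
      (\<forall>a\<in>P. \<forall>b\<in>P. even a \<longrightarrow> odd b \<longrightarrow> a < b)}"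

definition p_od_ed :: "nat \<Rightarrow> nat \<Rightarrow> nat" where
  "p_od_ed m n = card {P \<in> P_od_ed. card P = m \<and> \<Sum>P = n}"

definition D_o :: "nat \<Rightarrow> nat \<Rightarrow> nat" where
  "D_o m n = card {P :: nat set. finite P \<and> (\<forall>a\<in>P. odd a) \<and> card P = m \<and> \<Sum>P = n}"

end

theory Submission
  imports Defs
begin

definition mo :: "nat set \<Rightarrow> nat" where "mo P = Min {x\<in>P. odd x}"
definition me :: "nat set \<Rightarrow> nat" where "me P = Max {x\<in>P. even x}"
definition ff :: "nat set \<Rightarrow> nat set" where "ff P = insert (mo P + 1) (P - {mo P})"
definition gg :: "nat set \<Rightarrow> nat set" where "gg P = insert (me P - 1) (P - {me P})"

lemma mo_props:
  assumes "finite P" "\<exists>x\<in>P. odd x"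
  shows "mo P \<in> P" "odd (mo P)" "\<And>x. x \<in> P \<Longrightarrow> odd x \<Longrightarrow> mo P \<le> x"
proof -
  have f: "finite {x\<in>P. odd x}" "{x\<in>P. odd x} \<noteq> {}" using assms by auto
  show "mo P \<in> P" "odd (mo P)" using Min_in[OF f] unfolding mo_def by auto
  show "\<And>x. x \<in> P \<Longrightarrow> odd x \<Longrightarrow> mo P \<le> x" using f unfolding mo_def by auto
qed

lemma me_props:
  assumes "finite P" "\<exists>x\<in>P. even x"
  shows "me P \<in> P" "even (me P)" "\<And>x. x \<in> P \<Longrightarrow> even x \<Longrightarrow> x \<le> me P"
proof -
  have f: "finite {x\<in>P. even x}" "{x\<in>P. even x} \<noteq> {}" using assms by auto
  show "me P \<in> P" "even (me P)" using Max_in[OF f] unfolding me_def by auto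
  show "\<And>x. x \<in> P \<Longrightarrow> even x \<Longrightarrow> x \<le> me P" using f unfolding me_def by auto
qed

lemma ff_props:
  assumes P: "P \<in> P_od_ed" and ex: "\<exists>x\<in>P. odd x"
  shows "ff P \<in> P_od_ed" "card (ff P) = card P" "\<Sum>(ff P) = \<Sum>P + 1"
    "\<exists>x\<in>ff P. even x" "gg (ff P) = P"
proof -
  let ?o = "mo P"
  have fin: "finite P" and z: "0 \<notin> P" and c: "\<forall>a\<in>P. \<forall>b\<in>P. even a \<longrightarrow> odd b \<longrightarrow> a < b"
    using P unfolding P_od_ed_def by auto
  note mp = mo_props[OF fin ex]
  have n1: "?o + 1 \<notin> P"
  proof
    assume "?o + 1 \<in> P"
    with c mp show False by force
  qed
  have ffd: "ff P = insert (?o+1) (P - {?o})" by (simp add: ff_def)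
  show "card (ff P) = card P" unfolding ffd using fin n1 mp(1)
    by (simp add: card_Suc_Diff1 card_gt_0_iff; metis Suc_pred card_gt_0_iff empty_iff)
  have "\<Sum>P = ?o + \<Sum>(P - {?o})" using fin mp(1) by (simp add: sum.remove)
  then show "\<Sum>(ff P) = \<Sum>P + 1" unfolding ffd using fin n1 by simp
  show "\<exists>x\<in>ff P. even x" unfolding ffd using mp(2) by auto
  have cond: "\<forall>a\<in>ff P. \<forall>b\<in>ff P. even a \<longrightarrow> odd b \<longrightarrow> a < b"
  proof (intro ballI impI)
    fix a b assume a: "a \<in> ff P" and b: "b \<in> ff P" and ea: "even a" and ob: "odd b"
    have bP: "b \<in> P" "b \<noteq> ?o" using b ob mp(2) unfolding ffd by auto
    then have "?o < b" using mp(3)[OF bP(1) ob] by simp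
    then have "?o + 1 < b" using mp(2) ob by (metis Suc_eq_plus1 Suc_lessI even_Suc)
    moreover have "a = ?o + 1 \<or> (a \<in> P \<and> a < ?o)" using a c mp ea unfolding ffd by auto
    ultimately show "a < b" by auto
  qed
  show "ff P \<in> P_od_ed" unfolding P_od_ed_def using cond fin z unfolding ffd by auto
  have fin2: "finite (ff P)" unfolding ffd using fin by simp
  have ev: "\<exists>x\<in>ff P. even x" unfolding ffd using mp(2) by auto
  note me2 = me_props[OF fin2 ev]
  have "me (ff P) = ?o + 1"
  proof (rule antisym)
    show "?o + 1 \<le> me (ff P)" using me2(3) mp(2) unfolding ffd by auto
    have "me (ff P) = ?o + 1 \<or> (me (ff P) \<in> P \<and> me (ff P) < ?o)"
      using me2(1,2) c mp unfolding ffd by auto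
    then show "me (ff P) \<le> ?o + 1" by auto
  qed
  then show "gg (ff P) = P" unfolding gg_def ffd using n1 mp(1) by auto
qed

lemma gg_props:
  assumes P: "P \<in> P_od_ed" and ex: "\<exists>x\<in>P. even x"
  shows "gg P \<in> P_od_ed" "card (gg P) = card P" "\<Sum>(gg P) + 1 = \<Sum>P"
    "ff (gg P) = P"
proof -
  let ?e = "me P"
  have fin: "finite P" and z: "0 \<notin> P" and c: "\<forall>a\<in>P. \<forall>b\<in>P. even a \<longrightarrow> odd b \<longrightarrow> a < b"
    using P unfolding P_od_ed_def by auto
  note mp = me_props[OF fin ex]
  have e2: "?e \<ge> 2" using mp(1,2) z by (metis One_nat_def Suc_1 Suc_leI le_neq_implies_less not_less_eq_eq odd_one zero_le)
  have n1: "?e - 1 \<notin> P"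
  proof
    assume "?e - 1 \<in> P"
    moreover have "odd (?e - 1)" using mp(2) e2 by simp
    ultimately show False using c mp e2 by force
  qed
  have ggd: "gg P = insert (?e - 1) (P - {?e})" by (simp add: gg_def)
  show "card (gg P) = card P" unfolding ggd using fin n1 mp(1)
    by (simp add: card_Suc_Diff1 card_gt_0_iff; metis Suc_pred card_gt_0_iff empty_iff)
  have "\<Sum>P = ?e + \<Sum>(P - {?e})" using fin mp(1) by (simp add: sum.remove)
  then show "\<Sum>(gg P) + 1 = \<Sum>P" unfolding ggd using fin n1 e2 by simp
  have cond: "\<forall>a\<in>gg P. \<forall>b\<in>gg P. even a \<longrightarrow> odd b \<longrightarrow> a < b"
  proof (intro ballI impI)
    fix a b assume a: "a \<in> gg P" and b: "b \<in> gg P" and ea: "even a" and ob: "odd b"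
    have oe: "odd (?e - 1)" using mp(2) e2 by simp
    have aP: "a \<in> P" "a \<noteq> ?e" using a ea oe unfolding ggd by auto
    then have "a < ?e" using mp(3)[OF aP(1) ea] by simp
    then have "a < ?e - 1" using mp(2) ea
      by (metis Suc_pred' bot_nat_0.extremum_uniqueI dvd_diff_nat even_diff_nat less_Suc_eq_le
          le_neq_implies_less not_less_eq oe odd_one)
    moreover have "b = ?e - 1 \<or> (b \<in> P \<and> ?e < b)" using b c mp ob unfolding ggd by auto
    ultimately show "a < b" by auto
  qed
  show "gg P \<in> P_od_ed" unfolding P_od_ed_def using cond fin z e2 unfolding ggd by auto
  have fin2: "finite (gg P)" unfolding ggd using fin by simp
  have oe: "odd (?e - 1)" using mp(2) e2 by simp
  have ev: "\<exists>x\<in>gg P. odd x" unfolding ggd using oe by auto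
  note me2 = mo_props[OF fin2 ev]
  have "mo (gg P) = ?e - 1"
  proof (rule antisym)
    show "mo (gg P) \<le> ?e - 1" using me2(3) oe unfolding ggd by auto
    have "mo (gg P) = ?e - 1 \<or> (mo (gg P) \<in> P \<and> ?e < mo (gg P))"
      using me2(1,2) c mp unfolding ggd by auto
    then show "?e - 1 \<le> mo (gg P)" by auto
  qed
  then show "ff (gg P) = P" unfolding ff_def ggd using n1 mp(1) e2 by auto
qed

theorem mainTheorem2:
  fixes m n :: nat
  assumes "m \<ge> 1" and "n \<ge> 1"
  shows "int (p_od_ed m (2*n)) - int (p_od_ed m (2*n - 1)) = int (D_o m (2*n))"
proof -
  define A where "A = {P \<in> P_od_ed. card P = m \<and> \<Sum>P = 2*n}"
  define B where "B = {P \<in> P_od_ed. card P = m \<and> \<Sum>P = 2*n - 1}"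
  define C where "C = {P :: nat set. finite P \<and> (\<forall>a\<in>P. odd a) \<and> card P = m \<and> \<Sum>P = 2*n}"
  define A1 where "A1 = {P \<in> A. \<exists>x\<in>P. even x}"
  have AC1: "A = A1 \<union> C"
    unfolding A_def A1_def C_def P_od_ed_def by auto
  have AC2: "A1 \<inter> C = {}"
    unfolding A_def A1_def C_def P_od_ed_def by auto
  note AC = AC1 AC2
  have finA: "finite A"
  proof (rule finite_subset)
    show "A \<subseteq> Pow {..2*n}"
    proof
      fix P assume "P \<in> A"
      then have "finite P" "\<Sum>P = 2*n" unfolding A_def P_od_ed_def by auto
      then show "P \<in> Pow {..2*n}" using member_le_sum[of _ P "\<lambda>x. x"] by fastforce
    qed
  qed simp
  have oddB: "\<exists>x\<in>P. odd x" if "P \<in> B" for P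
  proof (rule ccontr)
    assume "\<not> ?thesis"
    then have "even (\<Sum>P)" by (simp add: dvd_sum)
    moreover have "\<Sum>P = 2*n - 1" using that unfolding B_def by auto
    ultimately show False using assms(2) by presburger
  qed
  have "bij_betw ff B A1"
  proof (rule bij_betw_byWitness[where f'=gg])
    show "\<forall>a\<in>B. gg (ff a) = a" using ff_props(5) oddB unfolding B_def by auto
    show "\<forall>a\<in>A1. ff (gg a) = a" using gg_props(4) unfolding A1_def A_def by auto
    show "ff ` B \<subseteq> A1"
    proof
      fix Q assume "Q \<in> ff ` B"
      then obtain P where P: "P \<in> B" "Q = ff P" by auto
      note fp = ff_props[OF _ oddB[OF P(1)]]
      show "Q \<in> A1" using P fp assms(2) unfolding A1_def A_def B_def by auto
    qed
    show "gg ` A1 \<subseteq> B"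
    proof
      fix Q assume "Q \<in> gg ` A1"
      then obtain P where P: "P \<in> A1" "Q = gg P" by auto
      then have "P \<in> P_od_ed" "\<exists>x\<in>P. even x" unfolding A1_def A_def by auto
      note fp = gg_props[OF this]
      show "Q \<in> B" using P fp assms(2) unfolding A1_def A_def B_def by auto
    qed
  qed
  then have cB: "card B = card A1" by (rule bij_betw_same_card)
  have "card A = card A1 + card C"
    using AC finA by (simp add: card_Un_disjoint)
  moreover have "p_od_ed m (2*n) = card A" unfolding p_od_ed_def A_def by simp
  moreover have "p_od_ed m (2*n - 1) = card B" unfolding p_od_ed_def B_def by simp
  moreover have "D_o m (2*n) = card C" unfolding D_o_def C_def by simp
  ultimately show ?thesis using cB by simp
qed

end
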